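(* Let $(L,[\cdot,\cdot],\cdot,\alpha)$ be a multiplicative Hom-post-Lie algebra. Then $(L\otimes L,\alpha\otimes\alpha)$ is a module over $L$ with the actions $x\diamond(y\otimes z)=[\alpha(x),y]\otimes\alpha(z)+\alpha(y)\otimes[\alpha(x),z]$ and $x\bullet(y\otimes z)=(\alpha(x)\cdot y)\otimes\alpha(z)+\alpha(y)\otimes(\alpha(x)\cdot z)$, for $x,y,z\in L$.
   Context: All vector spaces are over a field $\mathbb{K}$ of characteristic $\neq 2$. A Hom-Lie algebra is $(L,[\cdot,\cdot],\alpha)$ with $[\cdot,\cdot]$ bilinear skew-symmetric, $\alpha$ linear, and $[\alpha(x),[y,z]]+[\alpha(y),[z,x]]+[\alpha(z),[x,y]]=0$. A Hom-post-Lie algebra $(L,[\cdot,\cdot],\cdot,\alpha)$ is a Hom-Lie algebra with bilinear $\cdot$ such that $\alpha(z)\cdot[x,y]-[z\cdot x,\alpha(y)]-[\alpha(x),z\cdot y]=0$ and $\alpha(z)\cdot(y\cdot x)-\alpha(y)\cdot(z\cdot x)+(y\cdot z)\cdot\alpha(x)-(z\cdot y)\cdot\alpha(x)+[y,z]\cdot\alpha(x)=0$ for all $x,y,z$; it is multiplicative if $\alpha([x,y])=[\alpha(x),\alpha(y)]$ and $\alpha(x\cdot y)=\alpha(x)\cdot\alpha(y)$. A module over $L$ is a vector space $M$ with linear $\alpha_M$ and bilinear $\diamond,\bullet:L\otimes M\to M$ such that for all $x,y\in L,m\in M$: (i) $\alpha_M(x\diamond m)=\alpha(x)\diamond\alpha_M(m)$,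 $\alpha_M(x\bullet m)=\alpha(x)\bullet\alpha_M(m)$; (ii) $[x,y]\diamond\alpha_M(m)=\alpha(x)\diamond(y\diamond m)-\alpha(y)\diamond(x\diamond m)$; (iii) $(x\cdot y)\diamond\alpha_M(m)=\alpha(x)\bullet(y\diamond m)-\alpha(y)\diamond(x\bullet m)$; (iv) $[x,y]\bullet\alpha_M(m)=\alpha(x)\bullet(y\bullet m)-\alpha(y)\bullet(x\bullet m)-(x\cdot y)\bullet\alpha_M(m)+(y\cdot x)\bullet\alpha_M(m)$. *)

theory Defs
  imports Complex_Main
begin

definition bilinear_map ::
  "('k::field \<Rightarrow> 'a::ab_group_add \<Rightarrow> 'a) \<Rightarrow> ('k \<Rightarrow> 'b::ab_group_add \<Rightarrow> 'b)
   \<Rightarrow> ('k \<Rightarrow> 'c::ab_group_add \<Rightarrow> 'c) \<Rightarrow> ('a \<Rightarrow> 'b \<Rightarrow> 'c) \<Rightarrow> bool" where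
  "bilinear_map s1 s2 s3 f \<longleftrightarrow>
     (\<forall>x. Vector_Spaces.linear s2 s3 (f x)) \<and> (\<forall>y. Vector_Spaces.linear s1 s3 (\<lambda>x. f x y))"

definition hom_lie_algebra ::
  "('k::field \<Rightarrow> 'v::ab_group_add \<Rightarrow> 'v) \<Rightarrow> ('v \<Rightarrow> 'v \<Rightarrow> 'v) \<Rightarrow> ('v \<Rightarrow> 'v) \<Rightarrow> bool" where
  "hom_lie_algebra s br \<alpha> \<longleftrightarrow>
     vector_space s \<and> bilinear_map s s s br \<and> Vector_Spaces.linear s s \<alpha> \<and>
     (\<forall>x y. br x y = - br y x) \<and>
     (\<forall>x y z. br (\<alpha> x) (br y z) + br (\<alpha> y) (br z x) + br (\<alpha> z) (br x y) = 0)"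

definition hom_post_lie_algebra ::
  "('k::field \<Rightarrow> 'v::ab_group_add \<Rightarrow> 'v) \<Rightarrow> ('v \<Rightarrow> 'v \<Rightarrow> 'v) \<Rightarrow> ('v \<Rightarrow> 'v \<Rightarrow> 'v)
   \<Rightarrow> ('v \<Rightarrow> 'v) \<Rightarrow> bool" where
  "hom_post_lie_algebra s br dot \<alpha> \<longleftrightarrow>
     hom_lie_algebra s br \<alpha> \<and> bilinear_map s s s dot \<and>
     (\<forall>x y z. dot (\<alpha> z) (br x y) - br (dot z x) (\<alpha> y) - br (\<alpha> x) (dot z y) = 0) \<and>
     (\<forall>x y z. dot (\<alpha> z) (dot y x) - dot (\<alpha> y) (dot z x) + dot (dot y z) (\<alpha> x)
               - dot (dot z y) (\<alpha> x) + dot (br y z) (\<alpha> x) = 0)"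

definition multiplicative_hom_post_lie_algebra ::
  "('k::field \<Rightarrow> 'v::ab_group_add \<Rightarrow> 'v) \<Rightarrow> ('v \<Rightarrow> 'v \<Rightarrow> 'v) \<Rightarrow> ('v \<Rightarrow> 'v \<Rightarrow> 'v)
   \<Rightarrow> ('v \<Rightarrow> 'v) \<Rightarrow> bool" where
  "multiplicative_hom_post_lie_algebra s br dot \<alpha> \<longleftrightarrow>
     hom_post_lie_algebra s br dot \<alpha> \<and>
     (\<forall>x y. \<alpha> (br x y) = br (\<alpha> x) (\<alpha> y)) \<and>
     (\<forall>x y. \<alpha> (dot x y) = dot (\<alpha> x) (\<alpha> y))"

definition hom_post_lie_module ::
  "('k::field \<Rightarrow> 'v::ab_group_add \<Rightarrow> 'v) \<Rightarrow> ('v \<Rightarrow> 'v \<Rightarrow> 'v) \<Rightarrow> ('v \<Rightarrow> 'v \<Rightarrow> 'v)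
   \<Rightarrow> ('v \<Rightarrow> 'v) \<Rightarrow> ('k \<Rightarrow> 'm::ab_group_add \<Rightarrow> 'm) \<Rightarrow> ('m \<Rightarrow> 'm)
   \<Rightarrow> ('v \<Rightarrow> 'm \<Rightarrow> 'm) \<Rightarrow> ('v \<Rightarrow> 'm \<Rightarrow> 'm) \<Rightarrow> bool" where
  "hom_post_lie_module s br dot \<alpha> sM \<alpha>M dm bt \<longleftrightarrow>
     vector_space sM \<and> Vector_Spaces.linear sM sM \<alpha>M \<and>
     bilinear_map s sM sM dm \<and> bilinear_map s sM sM bt \<and>
     (\<forall>x m. \<alpha>M (dm x m) = dm (\<alpha> x) (\<alpha>M m)) \<and>
     (\<forall>x m. \<alpha>M (bt x m) = bt (\<alpha> x) (\<alpha>M m)) \<and>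
     (\<forall>x y m. dm (br x y) (\<alpha>M m) = dm (\<alpha> x) (dm y m) - dm (\<alpha> y) (dm x m)) \<and>
     (\<forall>x y m. dm (dot x y) (\<alpha>M m) = bt (\<alpha> x) (dm y m) - dm (\<alpha> y) (bt x m)) \<and>
     (\<forall>x y m. bt (br x y) (\<alpha>M m) = bt (\<alpha> x) (bt y m) - bt (\<alpha> y) (bt x m)
                - bt (dot x y) (\<alpha>M m) + bt (dot y x) (\<alpha>M m))"

text \<open>(T, tp) is a tensor product of L with itself: tp is bilinear and has the
  universal property (unique linear factorisation of bilinear maps) with respect
  to the target spaces K and T itself. Together these determine T = L \<otimes> L up to
  unique isomorphism compatible with tp.\<close>
definition is_tensor_square ::
  "('k::field \<Rightarrow> 'v::ab_group_add \<Rightarrow> 'v) \<Rightarrow> ('k \<Rightarrow> 't::ab_group_add \<Rightarrow> 't)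
   \<Rightarrow> ('v \<Rightarrow> 'v \<Rightarrow> 't) \<Rightarrow> bool" where
  "is_tensor_square s sT tp \<longleftrightarrow>
     vector_space sT \<and> bilinear_map s s sT tp \<and>
     (\<forall>f :: 'v \<Rightarrow> 'v \<Rightarrow> 'k. bilinear_map s s (*) f \<longrightarrow>
        (\<exists>!g. Vector_Spaces.linear sT (*) g \<and> (\<forall>y z. g (tp y z) = f y z))) \<and>
     (\<forall>f :: 'v \<Rightarrow> 'v \<Rightarrow> 't. bilinear_map s s sT f \<longrightarrow>
        (\<exists>!g. Vector_Spaces.linear sT sT g \<and> (\<forall>y z. g (tp y z) = f y z)))"

end

theory Submission
  imports Defs
begin

lemma addhom_diff:
  fixes f :: "'a::ab_group_add \<Rightarrow> 'b::ab_group_add"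
  assumes "\<And>x y. f (x+y) = f x + f y"
  shows "f (a - b) = f a - f b" "f (- a) = - f a"
proof -
  have z: "f 0 = 0" using assms[of 0 0] by simp
  have n: "f (- c) = - f c" for c using assms[of c "-c"] z
    by (metis add.right_inverse minus_unique)
  show "f (- a) = - f a" by (rule n)
  show "f (a - b) = f a - f b" using assms[of a "-b"] n[of b] by simp
qed

theorem mainTheorem4:
  fixes s :: "'k::field \<Rightarrow> 'v::ab_group_add \<Rightarrow> 'v"
    and br dot :: "'v \<Rightarrow> 'v \<Rightarrow> 'v"
    and \<alpha> :: "'v \<Rightarrow> 'v"
    and sT :: "'k \<Rightarrow> 't::ab_group_add \<Rightarrow> 't"
    and tp :: "'v \<Rightarrow> 'v \<Rightarrow> 't"
  assumes "(2::'k) \<noteq> 0"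
    and "multiplicative_hom_post_lie_algebra s br dot \<alpha>"
    and "is_tensor_square s sT tp"
  shows "\<exists>\<alpha>T dm bt.
           (\<forall>y z. \<alpha>T (tp y z) = tp (\<alpha> y) (\<alpha> z)) \<and>
           (\<forall>x y z. dm x (tp y z) = tp (br (\<alpha> x) y) (\<alpha> z) + tp (\<alpha> y) (br (\<alpha> x) z)) \<and>
           (\<forall>x y z. bt x (tp y z) = tp (dot (\<alpha> x) y) (\<alpha> z) + tp (\<alpha> y) (dot (\<alpha> x) z)) \<and>
           hom_post_lie_module s br dot \<alpha> sT \<alpha>T dm bt"
proof -
  have VL: "vector_space s" and brl: "\<forall>x. Vector_Spaces.linear s s (br x)" and brr: "\<forall>y. Vector_Spaces.linear s s (\<lambda>x. br x y)"
    and al: "Vector_Spaces.linear s s \<alpha>" and skew: "\<And>x y. br x y = - br y x"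
    and jac: "\<And>x y z. br (\<alpha> x) (br y z) + br (\<alpha> y) (br z x) + br (\<alpha> z) (br x y) = 0"
    and dotl: "\<forall>x. Vector_Spaces.linear s s (dot x)" and dotr: "\<forall>y. Vector_Spaces.linear s s (\<lambda>x. dot x y)"
    and ax1: "\<And>x y z. dot (\<alpha> z) (br x y) - br (dot z x) (\<alpha> y) - br (\<alpha> x) (dot z y) = 0"
    and ax2: "\<And>x y z. dot (\<alpha> z) (dot y x) - dot (\<alpha> y) (dot z x) + dot (dot y z) (\<alpha> x)
               - dot (dot z y) (\<alpha> x) + dot (br y z) (\<alpha> x) = 0"
    and mbr: "\<And>x y. \<alpha> (br x y) = br (\<alpha> x) (\<alpha> y)"
    and mdot: "\<And>x y. \<alpha> (dot x y) = dot (\<alpha> x) (\<alpha> y)"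
    using assms(2) unfolding multiplicative_hom_post_lie_algebra_def hom_post_lie_algebra_def
      hom_lie_algebra_def bilinear_map_def by blast+
  have VT: "vector_space sT" and tpl: "\<forall>x. Vector_Spaces.linear s sT (tp x)" and tpr: "\<forall>y. Vector_Spaces.linear s sT (\<lambda>x. tp x y)"
    and U2: "\<And>f. bilinear_map s s sT f \<Longrightarrow> (\<exists>!g. Vector_Spaces.linear sT sT g \<and> (\<forall>y z. g (tp y z) = f y z))"
    using assms(3) unfolding is_tensor_square_def bilinear_map_def by auto
  have sT_add: "\<And>c u v. sT c (u + v) = sT c u + sT c v"
    using VT unfolding vector_space_def by auto
  have sT_ss: "\<And>c d u. sT c (sT d u) = sT (c*d) u"
    using VT unfolding vector_space_def by auto
  have sT_diff: "\<And>c u v. sT c (u - v) = sT c u - sT c v" and sT_neg: "\<And>c u. sT c (- u) = - sT c u"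
    using addhom_diff[of "sT c" for c] sT_add by blast+
  have br2_add: "\<And>x a b. br x (a+b) = br x a + br x b" and br2_sc: "\<And>x c a. br x (s c a) = s c (br x a)"
    using brl unfolding Vector_Spaces.linear_iff by auto
  have br1_add: "\<And>x a b. br (a+b) x = br a x + br b x" and br1_sc: "\<And>x c a. br (s c a) x = s c (br a x)"
    using brr unfolding Vector_Spaces.linear_iff by auto
  have dot2_add: "\<And>x a b. dot x (a+b) = dot x a + dot x b" and dot2_sc: "\<And>x c a. dot x (s c a) = s c (dot x a)"
    using dotl unfolding Vector_Spaces.linear_iff by auto
  have dot1_add: "\<And>x a b. dot (a+b) x = dot a x + dot b x" and dot1_sc: "\<And>x c a. dot (s c a) x = s c (dot a x)"
    using dotr unfolding Vector_Spaces.linear_iff by auto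
  have tp2_add: "\<And>x a b. tp x (a+b) = tp x a + tp x b" and tp2_sc: "\<And>x c a. tp x (s c a) = sT c (tp x a)"
    using tpl unfolding Vector_Spaces.linear_iff by auto
  have tp1_add: "\<And>x a b. tp (a+b) x = tp a x + tp b x" and tp1_sc: "\<And>x c a. tp (s c a) x = sT c (tp a x)"
    using tpr unfolding Vector_Spaces.linear_iff by auto
  have al_add: "\<And>a b. \<alpha> (a+b) = \<alpha> a + \<alpha> b" and al_sc: "\<And>c a. \<alpha> (s c a) = s c (\<alpha> a)"
    using al unfolding Vector_Spaces.linear_iff by auto
  have br2_diff: "\<And>x a b. br x (a-b) = br x a - br x b" and br2_neg: "\<And>x a. br x (-a) = - br x a"
    using addhom_diff[of "br x" for x] br2_add by blast+
  have br1_diff: "\<And>x a b. br (a-b) x = br a x - br b x" and br1_neg: "\<And>x a. br (-a) x = - br a x"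
    using addhom_diff[of "\<lambda>a. br a x" for x] br1_add by blast+
  have dot2_diff: "\<And>x a b. dot x (a-b) = dot x a - dot x b" and dot2_neg: "\<And>x a. dot x (-a) = - dot x a"
    using addhom_diff[of "dot x" for x] dot2_add by blast+
  have dot1_diff: "\<And>x a b. dot (a-b) x = dot a x - dot b x" and dot1_neg: "\<And>x a. dot (-a) x = - dot a x"
    using addhom_diff[of "\<lambda>a. dot a x" for x] dot1_add by blast+
  have tp2_diff: "\<And>x a b. tp x (a-b) = tp x a - tp x b" and tp2_neg: "\<And>x a. tp x (-a) = - tp x a"
    using addhom_diff[of "tp x" for x] tp2_add by blast+
  have tp1_diff: "\<And>x a b. tp (a-b) x = tp a x - tp b x" and tp1_neg: "\<And>x a. tp (-a) x = - tp a x"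
    using addhom_diff[of "\<lambda>a. tp a x" for x] tp1_add by blast+
  have al_diff: "\<And>a b. \<alpha> (a-b) = \<alpha> a - \<alpha> b" and al_neg: "\<And>a. \<alpha> (-a) = - \<alpha> a"
    using addhom_diff[of "\<alpha>"] al_add by blast+
  note S = sT_add sT_ss sT_diff sT_neg br2_add br2_sc br1_add br1_sc dot2_add dot2_sc dot1_add dot1_sc
    tp2_add tp2_sc tp1_add tp1_sc al_add al_sc br2_diff br2_neg br1_diff br1_neg dot2_diff dot2_neg
    dot1_diff dot1_neg tp2_diff tp2_neg tp1_diff tp1_neg al_diff al_neg mbr mdot
  have UNIQ: "g = h" if "Vector_Spaces.linear sT sT g" "Vector_Spaces.linear sT sT h" "\<And>y z. g (tp y z) = h (tp y z)" for g h
  proof -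
    have "bilinear_map s s sT (\<lambda>y z. h (tp y z))"
      unfolding bilinear_map_def
      using Vector_Spaces.linear_compose[OF tpl[rule_format] that(2)]
        Vector_Spaces.linear_compose[OF tpr[rule_format] that(2)]
      by (simp add: o_def)
    from U2[OF this] that show ?thesis by metis
  qed
  have EX: "\<exists>g. Vector_Spaces.linear sT sT g \<and> (\<forall>y z. g (tp y z) = F y z)" if "bilinear_map s s sT F" for F
    using U2[OF that] by blast
  have linT: "Vector_Spaces.linear sT sT g" if "\<And>u v. g (u+v) = g u + g v" "\<And>c u. g (sT c u) = sT c (g u)" for g
    using VT that by (simp add: Vector_Spaces.linear_iff)
  have linL: "Vector_Spaces.linear s sT f" if "\<And>u v. f (u+v) = f u + f v" "\<And>c u. f (s c u) = sT c (f u)" for f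
    using VL VT that by (simp add: Vector_Spaces.linear_iff)
  have bil: "bilinear_map s s sT F" if "\<And>y a b. F y (a+b) = F y a + F y b" "\<And>y c a. F y (s c a) = sT c (F y a)"
     "\<And>z a b. F (a+b) z = F a z + F b z" "\<And>z c a. F (s c a) z = sT c (F a z)" for F
    unfolding bilinear_map_def using that by (auto intro!: linL)
  have "bilinear_map s s sT (\<lambda>y z. tp (\<alpha> y) (\<alpha> z))" by (rule bil) (simp_all add: S)
  from EX[OF this] obtain \<alpha>T where aTl: "Vector_Spaces.linear sT sT \<alpha>T"
    and aTtp: "\<And>y z. \<alpha>T (tp y z) = tp (\<alpha> y) (\<alpha> z)" by blast
  have "\<forall>x. \<exists>g. Vector_Spaces.linear sT sT g \<and> (\<forall>y z. g (tp y z) = tp (br (\<alpha> x) y) (\<alpha> z) + tp (\<alpha> y) (br (\<alpha> x) z))"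
  proof
    fix x
    have "bilinear_map s s sT (\<lambda>y z. tp (br (\<alpha> x) y) (\<alpha> z) + tp (\<alpha> y) (br (\<alpha> x) z))"
      by (rule bil) (simp_all add: S add_ac)
    from EX[OF this] show "\<exists>g. Vector_Spaces.linear sT sT g \<and> (\<forall>y z. g (tp y z) = tp (br (\<alpha> x) y) (\<alpha> z) + tp (\<alpha> y) (br (\<alpha> x) z))" .
  qed
  from choice[OF this] obtain D where Dl: "\<And>x. Vector_Spaces.linear sT sT (D x)"
    and Dtp: "\<And>x y z. D x (tp y z) = tp (br (\<alpha> x) y) (\<alpha> z) + tp (\<alpha> y) (br (\<alpha> x) z)" by blast
  have "\<forall>x. \<exists>g. Vector_Spaces.linear sT sT g \<and> (\<forall>y z. g (tp y z) = tp (dot (\<alpha> x) y) (\<alpha> z) + tp (\<alpha> y) (dot (\<alpha> x) z))"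
  proof
    fix x
    have "bilinear_map s s sT (\<lambda>y z. tp (dot (\<alpha> x) y) (\<alpha> z) + tp (\<alpha> y) (dot (\<alpha> x) z))"
      by (rule bil) (simp_all add: S add_ac)
    from EX[OF this] show "\<exists>g. Vector_Spaces.linear sT sT g \<and> (\<forall>y z. g (tp y z) = tp (dot (\<alpha> x) y) (\<alpha> z) + tp (\<alpha> y) (dot (\<alpha> x) z))" .
  qed
  from choice[OF this] obtain B where Bl: "\<And>x. Vector_Spaces.linear sT sT (B x)"
    and Btp: "\<And>x y z. B x (tp y z) = tp (dot (\<alpha> x) y) (\<alpha> z) + tp (\<alpha> y) (dot (\<alpha> x) z)" by blast
  have aT_add: "\<And>u v. \<alpha>T (u+v) = \<alpha>T u + \<alpha>T v" and aT_sc: "\<And>c u. \<alpha>T (sT c u) = sT c (\<alpha>T u)"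
    using aTl unfolding Vector_Spaces.linear_iff by auto
  have D_add: "\<And>x u v. D x (u+v) = D x u + D x v" and D_sc: "\<And>x c u. D x (sT c u) = sT c (D x u)"
    using Dl unfolding Vector_Spaces.linear_iff by auto
  have B_add: "\<And>x u v. B x (u+v) = B x u + B x v" and B_sc: "\<And>x c u. B x (sT c u) = sT c (B x u)"
    using Bl unfolding Vector_Spaces.linear_iff by auto
  have aT_diff: "\<And>a b. \<alpha>T (a-b) = \<alpha>T a - \<alpha>T b"
    using addhom_diff[of "\<alpha>T"] aT_add by blast+
  have D_diff: "\<And>x a b. D x (a-b) = D x a - D x b"
    using addhom_diff[of "D x" for x] D_add by blast+
  have B_diff: "\<And>x a b. B x (a-b) = B x a - B x b"
    using addhom_diff[of "B x" for x] B_add by blast+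
  note S2 = S aT_add aT_sc D_add D_sc B_add B_sc aT_diff D_diff B_diff aTtp Dtp Btp
  have Dx_add: "D (x1 + x2) = (\<lambda>m. D x1 m + D x2 m)" for x1 x2
    by (rule UNIQ) (auto intro!: linT simp: S2 add_ac)
  have Dx_sc: "D (s c x) = (\<lambda>m. sT c (D x m))" for c x
    by (rule UNIQ) (auto intro!: linT simp: S2 add_ac mult.commute)
  have Bx_add: "B (x1 + x2) = (\<lambda>m. B x1 m + B x2 m)" for x1 x2
    by (rule UNIQ) (auto intro!: linT simp: S2 add_ac)
  have Bx_sc: "B (s c x) = (\<lambda>m. sT c (B x m))" for c x
    by (rule UNIQ) (auto intro!: linT simp: S2 add_ac mult.commute)
  have bD: "bilinear_map s sT sT D"
    unfolding bilinear_map_def using Dl by (auto intro!: linL simp: Dx_add Dx_sc)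
  have bB: "bilinear_map s sT sT B"
    unfolding bilinear_map_def using Bl by (auto intro!: linL simp: Bx_add Bx_sc)
  have K1: "br (br (\<alpha> x) (\<alpha> y)) (\<alpha> a) = br (\<alpha> (\<alpha> x)) (br (\<alpha> y) a) - br (\<alpha> (\<alpha> y)) (br (\<alpha> x) a)" for x y a
  proof -
    have "br (\<alpha> (\<alpha> x)) (br (\<alpha> y) a) + - br (\<alpha> (\<alpha> y)) (br (\<alpha> x) a) + - br (br (\<alpha> x) (\<alpha> y)) (\<alpha> a) = 0"
      using jac[of "\<alpha> x" "\<alpha> y" a] skew[of a "\<alpha> x"] skew[of "\<alpha> a" "br (\<alpha> x) (\<alpha> y)"] mbr
      by (simp add: br2_neg)
    then show ?thesis by (simp add: algebra_simps)
  qed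
  have K2: "br (dot (\<alpha> x) (\<alpha> y)) (\<alpha> a) = dot (\<alpha> (\<alpha> x)) (br (\<alpha> y) a) - br (\<alpha> (\<alpha> y)) (dot (\<alpha> x) a)" for x y a
    using ax1[of "\<alpha> x" "\<alpha> y" a] by (simp add: algebra_simps)
  have K3: "dot (br (\<alpha> x) (\<alpha> y)) (\<alpha> a) = dot (\<alpha> (\<alpha> x)) (dot (\<alpha> y) a) - dot (\<alpha> (\<alpha> y)) (dot (\<alpha> x) a)
      - dot (dot (\<alpha> x) (\<alpha> y)) (\<alpha> a) + dot (dot (\<alpha> y) (\<alpha> x)) (\<alpha> a)" for x y a
    using ax2[of "\<alpha> x" "\<alpha> y" a] skew[of "\<alpha> y" "\<alpha> x"] by (simp add: dot1_neg algebra_simps)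
  have I1: "(\<lambda>m. \<alpha>T (D x m)) = (\<lambda>m. D (\<alpha> x) (\<alpha>T m))" for x
    by (rule UNIQ) (auto intro!: linT simp: S2)
  have I2: "(\<lambda>m. \<alpha>T (B x m)) = (\<lambda>m. B (\<alpha> x) (\<alpha>T m))" for x
    by (rule UNIQ) (auto intro!: linT simp: S2)
  have I3: "(\<lambda>m. D (br x y) (\<alpha>T m)) = (\<lambda>m. D (\<alpha> x) (D y m) - D (\<alpha> y) (D x m))" for x y
    by (rule UNIQ) (auto intro!: linT simp: S2 K1 algebra_simps)
  have I4: "(\<lambda>m. D (dot x y) (\<alpha>T m)) = (\<lambda>m. B (\<alpha> x) (D y m) - D (\<alpha> y) (B x m))" for x y
    by (rule UNIQ) (auto intro!: linT simp: S2 K2 algebra_simps)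
  have I5: "(\<lambda>m. B (br x y) (\<alpha>T m)) = (\<lambda>m. B (\<alpha> x) (B y m) - B (\<alpha> y) (B x m)
                - B (dot x y) (\<alpha>T m) + B (dot y x) (\<alpha>T m))" for x y
    by (rule UNIQ) (auto intro!: linT simp: S2 K3 algebra_simps)
  show ?thesis
    apply (rule exI[of _ \<alpha>T], rule exI[of _ D], rule exI[of _ B])
    unfolding hom_post_lie_module_def
    using VT aTl bD bB aTtp Dtp Btp I1 I2 I3 I4 I5 by metis
qed

end
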